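(* Let $C=6\pi/\sqrt2$. There is $\Gamma_0>0$ such that for all $\Gamma\in(0,\Gamma_0)$ the following holds. Let $\mathbb L\subset\mathbb Z^3$ be a lattice plaquette (unit square) and let $\theta_{\boldsymbol r'}$, $\boldsymbol r'\in\mathbb L$, be angles such that $|S^{(\gamma)}_{\boldsymbol r'}-S^{(\gamma)}_{\boldsymbol r''}|<\Gamma$ for each of the four bonds $(\boldsymbol r',\boldsymbol r'')$ of $\mathbb L$, with $\gamma$ the direction of that bond. Then for any $\boldsymbol r\in\mathbb L$, either all $\theta_{\boldsymbol r'}$, $\boldsymbol r'\in\mathbb L$, are within $C\sqrt\Gamma$ of $\theta_{\boldsymbol r}$, or there is a direction $\alpha$ among the two spanning $\mathbb L$ such that the neighbour $\boldsymbol r'$ of $\boldsymbol r$ with $\boldsymbol r'-\boldsymbol r\perp\hat{\mathrm e}_\alpha$ has $\theta_{\boldsymbol r'}$ within $C\sqrt\Gamma$ of $\theta_{\boldsymbol r}$ while the other two sites of $\mathbb L$ have angles within $C\sqrt\Gamma$ of $2\phi_\alpha-\theta_{\boldsymbol r}$ (the reflection of $\theta_{\boldsymbol r}$ through the $\alpha$-th of $\hat{\mathrm a},\hat{\mathrm b},\hat{\mathrm c}$). Angular distances are mod $2\pi$.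
   Context: $\boldsymbol S_{\boldsymbol r}=(\cos\theta_{\boldsymbol r},\sin\theta_{\boldsymbol r})$; $\hat{\mathrm a},\hat{\mathrm b},\hat{\mathrm c}$ are the unit vectors at angles $\phi_1=0,\phi_2=\tfrac{2\pi}3,\phi_3=-\tfrac{2\pi}3$ associated with lattice directions $\hat{\mathrm e}_1,\hat{\mathrm e}_2,\hat{\mathrm e}_3$, and $S^{(\gamma)}_{\boldsymbol r}=\cos(\theta_{\boldsymbol r}-\phi_\gamma)$. *)

theory Defs
  imports Complex_Main
begin

type_synonym site = "int \<times> int \<times> int"

definition sadd :: "site \<Rightarrow> site \<Rightarrow> site" where
  "sadd p q = (case p of (x1,y1,z1) \<Rightarrow> case q of (x2,y2,z2) \<Rightarrow> (x1+x2, y1+y2, z1+z2))"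

definition ssub :: "site \<Rightarrow> site \<Rightarrow> site" where
  "ssub p q = (case p of (x1,y1,z1) \<Rightarrow> case q of (x2,y2,z2) \<Rightarrow> (x1-x2, y1-y2, z1-z2))"

definition sdot :: "site \<Rightarrow> site \<Rightarrow> int" where
  "sdot p q = (case p of (x1,y1,z1) \<Rightarrow> case q of (x2,y2,z2) \<Rightarrow> x1*x2 + y1*y2 + z1*z2)"

definition edir :: "nat \<Rightarrow> site" where
  "edir g = (if g = 1 then (1,0,0) else if g = 2 then (0,1,0) else (0,0,1))"

text \<open>Angles phi_1 = 0, phi_2 = 2 pi/3, phi_3 = -2 pi/3 of the unit vectors a, b, c.\<close>
definition phi :: "nat \<Rightarrow> real" where
  "phi g = (if g = 1 then 0 else if g = 2 then 2*pi/3 else - (2*pi/3))"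

definition Sg :: "nat \<Rightarrow> real \<Rightarrow> real" where
  "Sg g th = cos (th - phi g)"

definition plaq :: "site \<Rightarrow> nat \<Rightarrow> nat \<Rightarrow> site set" where
  "plaq r0 a b = {r0, sadd r0 (edir a), sadd r0 (edir b), sadd (sadd r0 (edir a)) (edir b)}"

definition ang_close :: "real \<Rightarrow> real \<Rightarrow> real \<Rightarrow> bool" where
  "ang_close x y d \<longleftrightarrow> (\<exists>k::int. \<bar>x - y - 2*pi*of_int k\<bar> \<le> d)"

end

theory Submission
  imports Defs
begin



lemma abs_sin_shift: "\<bar>sin (v + of_int k * pi)\<bar> = \<bar>sin v\<bar>"
proof -
  have s0: "sin (of_int k * pi) = 0" using sin_zero_iff_int2 by blast
  have "cos (of_int k * pi)^2 = 1" using s0 sin_cos_squared_add[of "of_int k * pi"] by simp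
  then have c1: "\<bar>cos (of_int k * pi)\<bar> = 1" by (metis abs_power2 power2_eq_1_iff abs_1 abs_minus_cancel abs_of_nonneg abs_ge_zero)
  show ?thesis by (simp add: sin_add s0 abs_mult c1)
qed

lemma sin_lower: assumes "0 \<le> v" "v \<le> pi/2" "sin v \<le> s" "s \<le> 4/5"
  shows "v \<le> 6/5 * s"
proof -
  have mb: "\<bar>sin x - x\<bar> \<le> \<bar>x\<bar>^3/6" for x :: real
    using Maclaurin_sin_bound[of x 3] by (simp add: sin_coeff_def numeral_3_eq_3 eval_nat_numeral)
  have v1: "v \<le> 1"
  proof (rule ccontr)
    assume "\<not> v \<le> 1"
    then have "sin 1 \<le> sin v" using assms(2) by (intro sin_monotone_2pi_le) (use pi_ge_two in auto)
    moreover have "sin (1::real) \<ge> 5/6" using mb[of 1] by simp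
    ultimately show False using assms by linarith
  qed
  have "\<bar>sin v - v\<bar> \<le> v^3/6" using mb[of v] assms(1) by simp
  then have "sin v \<ge> v - v^3/6" by linarith
  moreover have "v^3 \<le> v" using v1 assms(1) by (metis power_le_one mult_left_le power_Suc numeral_3_eq_3 eval_nat_numeral(3) zero_le_power)
  ultimately show ?thesis using assms by linarith
qed

lemma jordan_small: assumes "\<bar>sin u\<bar> \<le> s" "s \<le> 4/5"
  shows "\<exists>k::int. \<bar>u - of_int k * pi\<bar> \<le> 6/5 * s"
proof -
  define k where "k = \<lfloor>u/pi + 1/2\<rfloor>"
  define v where "v = u - of_int k * pi"
  have "of_int k \<le> u/pi + 1/2" "u/pi + 1/2 < of_int k + 1" unfolding k_def by linarith+
  then have "of_int k * pi \<le> u + pi/2" "u + pi/2 < (of_int k + 1) * pi"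
    using pi_gt_zero by (simp_all add: field_simps)
  then have vb: "- (pi/2) \<le> v" "v \<le> pi/2" unfolding v_def by (simp_all add: algebra_simps)
  have "\<bar>sin v\<bar> \<le> s" using abs_sin_shift[of v k] assms unfolding v_def by simp
  then have "\<bar>v\<bar> \<le> 6/5 * s"
  proof (cases "v \<ge> 0")
    case True then show ?thesis using sin_lower[of v s] vb \<open>\<bar>sin v\<bar> \<le> s\<close> assms by auto
  next
    case False then show ?thesis using sin_lower[of "-v" s] vb \<open>\<bar>sin v\<bar> \<le> s\<close> assms by auto
  qed
  then show ?thesis unfolding v_def by blast
qed


lemma ac_diff: "x - y = x' - y' \<Longrightarrow> ang_close x y d = ang_close x' y' d"
  unfolding ang_close_def by simp

lemma ac_refl: "0 \<le> d \<Longrightarrow> ang_close x x d"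
  unfolding ang_close_def by (rule exI[of _ 0]) simp

lemma ac_sym: "ang_close x y d \<Longrightarrow> ang_close y x d"
  unfolding ang_close_def
proof -
  assume "\<exists>k::int. \<bar>x - y - 2*pi*of_int k\<bar> \<le> d"
  then obtain k :: int where "\<bar>x - y - 2*pi*of_int k\<bar> \<le> d" by blast
  then have "\<bar>y - x - 2*pi*of_int (-k)\<bar> \<le> d" by (simp add: abs_minus_commute)
  then show "\<exists>k::int. \<bar>y - x - 2*pi*of_int k\<bar> \<le> d" by blast
qed

lemma ac_trans: "ang_close x y d1 \<Longrightarrow> ang_close y z d2 \<Longrightarrow> ang_close x z (d1 + d2)"
  unfolding ang_close_def
proof -
  assume "\<exists>k::int. \<bar>x - y - 2*pi*of_int k\<bar> \<le> d1" "\<exists>k::int. \<bar>y - z - 2*pi*of_int k\<bar> \<le> d2"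
  then obtain k1 k2 :: int where "\<bar>x - y - 2*pi*of_int k1\<bar> \<le> d1" "\<bar>y - z - 2*pi*of_int k2\<bar> \<le> d2" by blast
  then have "\<bar>x - z - 2*pi*of_int (k1+k2)\<bar> \<le> d1 + d2" by (simp add: abs_le_iff algebra_simps)
  then show "\<exists>k::int. \<bar>x - z - 2*pi*of_int k\<bar> \<le> d1 + d2" by blast
qed

lemma ac_mono: "ang_close x y d1 \<Longrightarrow> d1 \<le> d2 \<Longrightarrow> ang_close x y d2"
  unfolding ang_close_def by (meson order_trans)

lemma ac_diffI: "ang_close x' y' d \<Longrightarrow> x - y = x' - y' \<Longrightarrow> ang_close x y d"
  using ac_diff by blast

lemma ac_neg: assumes "ang_close x y d" shows "ang_close (c - x) (c - y) d"
  by (rule ac_diffI[OF ac_sym[OF assms]]) simp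

definition idx :: "nat \<Rightarrow> int" where
  "idx g = (if g = 1 then 0 else if g = 2 then 1 else -1)"

lemma phi_idx: "phi g = of_int (idx g) * (2*pi/3)"
  by (simp add: phi_def idx_def)

lemma sep_int: assumes "ang_close (of_int m * (2*pi/3)) 0 e" "e < 2*pi/3" "\<not> 3 dvd m"
  shows False
proof -
  obtain k :: int where k: "\<bar>of_int m * (2*pi/3) - 2*pi*of_int k\<bar> \<le> e"
    using assms(1) unfolding ang_close_def by auto
  define t where "t = m - 3*k"
  have eqn: "of_int m * (2*pi/3) - 2*pi*of_int k = of_int t * (2*pi/3)" by (simp add: t_def algebra_simps)
  have "\<bar>of_int m * (2*pi/3) - 2*pi*of_int k\<bar> = \<bar>of_int t\<bar> * (2*pi/3)"
    unfolding eqn abs_mult by simp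
  then have lt: "\<bar>of_int t\<bar> * (2*pi/3) < 2*pi/3" using k assms(2) by linarith
  have "\<bar>real_of_int t\<bar> < 1"
  proof (rule ccontr)
    assume "\<not> \<bar>real_of_int t\<bar> < 1"
    then have "1 * (2*pi/3) \<le> \<bar>real_of_int t\<bar> * (2*pi/3)" by (intro mult_right_mono) auto
    then show False using lt by linarith
  qed
  then have "t = 0" by linarith
  then have "m - 3*k = 0" by (simp add: t_def)
  then show False using assms(3) by (metis dvd_triv_left eq_iff_diff_eq_0)
qed

lemma sep2: assumes "a \<in> {1,2,3}" "b \<in> {1,2,3}" "a \<noteq> b" "ang_close (2*phi a) (2*phi b) e" "e < 2*pi/3"
  shows False
proof -
  have "ang_close (of_int (2*(idx a - idx b)) * (2*pi/3)) 0 e"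
    using assms(4) by (subst ac_diff[of _ _ "2*phi a" "2*phi b"]) (simp_all add: phi_idx algebra_simps)
  moreover have "idx a - idx b \<in> {1,2,-1,-2}" using assms(1-3) by (auto simp: idx_def)
  then have "\<not> 3 dvd (2*(idx a - idx b))"
    by (cases "idx a - idx b = 1"; cases "idx a - idx b = 2"; cases "idx a - idx b = -1"; simp)
  ultimately show False using sep_int assms(5) by blast
qed

lemma sep4: assumes "a \<in> {1,2,3}" "b \<in> {1,2,3}" "a \<noteq> b" "ang_close (4*phi a) (4*phi b) e" "e < 2*pi/3"
  shows False
proof -
  have "ang_close (of_int (4*(idx a - idx b)) * (2*pi/3)) 0 e"
    using assms(4) by (subst ac_diff[of _ _ "4*phi a" "4*phi b"]) (simp_all add: phi_idx algebra_simps)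
  moreover have "idx a - idx b \<in> {1,2,-1,-2}" using assms(1-3) by (auto simp: idx_def)
  then have "\<not> 3 dvd (4*(idx a - idx b))"
    by (cases "idx a - idx b = 1"; cases "idx a - idx b = 2"; cases "idx a - idx b = -1"; simp)
  ultimately show False using sep_int assms(5) by blast
qed


lemma key: assumes "\<bar>Sg g x - Sg g y\<bar> < G" "0 < G" "G < 1/50"
  shows "ang_close y x (12/5 * sqrt (G/2)) \<or> ang_close y (2 * phi g - x) (12/5 * sqrt (G/2))"
proof -
  define s where "s = sqrt (G/2)"
  define p where "p = phi g"
  define P where "P = sin ((x+y)/2 - p)"
  define Q where "Q = sin ((y-x)/2)"
  have s0: "0 < s" using assms(2) by (simp add: s_def)
  have ss: "s * s = G/2" using assms(2) by (simp add: s_def)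
  have "s < 1/10"
  proof -
    have "sqrt (G/2) < sqrt (1/100)" using assms(3) by (simp add: real_sqrt_less_iff)
    moreover have "sqrt (1/100::real) = 1/10" by (simp add: real_sqrt_divide)
    ultimately show ?thesis by (simp add: s_def)
  qed
  have "cos (x - p) - cos (y - p) = 2 * P * Q"
    unfolding cos_diff_cos P_def Q_def by (simp add: field_simps)
  then have "\<bar>2 * P * Q\<bar> < G" using assms(1) by (simp add: Sg_def p_def)
  then have pq: "\<bar>P\<bar> * \<bar>Q\<bar> < s * s" using ss by (simp add: abs_mult)
  have "\<bar>P\<bar> \<le> s \<or> \<bar>Q\<bar> \<le> s"
  proof (rule ccontr)
    assume "\<not> (\<bar>P\<bar> \<le> s \<or> \<bar>Q\<bar> \<le> s)"
    then have "s * s \<le> \<bar>P\<bar> * \<bar>Q\<bar>" using s0 by (intro mult_mono) auto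
    then show False using pq by linarith
  qed
  then show ?thesis
  proof
    assume "\<bar>P\<bar> \<le> s"
    then obtain k :: int where k: "\<bar>(x+y)/2 - p - of_int k * pi\<bar> \<le> 6/5 * s"
      using jordan_small[of "(x+y)/2 - p" s] \<open>s < 1/10\<close> unfolding P_def by auto
    have h: "y - (2 * p - x) - 2*pi*of_int k = 2 * ((x+y)/2 - p - of_int k * pi)" by (simp add: field_simps)
    have "\<bar>y - (2 * p - x) - 2*pi*of_int k\<bar> \<le> 12/5 * s" unfolding h abs_mult using k by simp
    then show ?thesis unfolding ang_close_def s_def p_def by blast
  next
    assume "\<bar>Q\<bar> \<le> s"
    then obtain k :: int where k: "\<bar>(y-x)/2 - of_int k * pi\<bar> \<le> 6/5 * s"
      using jordan_small[of "(y-x)/2" s] \<open>s < 1/10\<close> unfolding Q_def by auto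
    have h: "y - x - 2*pi*of_int k = 2 * ((y-x)/2 - of_int k * pi)" by (simp add: field_simps)
    have "\<bar>y - x - 2*pi*of_int k\<bar> \<le> 12/5 * s" unfolding h abs_mult using k by simp
    then show ?thesis unfolding ang_close_def s_def p_def by blast
  qed
qed


lemma half:
  assumes h1: "ang_close y x d \<or> ang_close y (2*A - x) d"
    and h2: "ang_close z y d \<or> ang_close z (2*B - y) d"
    and h3: "ang_close z w d \<or> ang_close z (2*A - w) d"
    and hw: "ang_close w x d"
    and s2: "\<not> ang_close (2*A) (2*B) (4*d)"
    and d0: "0 \<le> d"
  shows "(ang_close y x (5*d) \<and> ang_close z x (5*d) \<and> ang_close w x (5*d)) \<or>
         (ang_close w x (5*d) \<and> ang_close y (2*A - x) (5*d) \<and> ang_close z (2*A - x) (5*d))"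
proof -
  have m: "ang_close u v e \<Longrightarrow> e \<le> 5*d \<Longrightarrow> ang_close u v (5*d)" for u v e using ac_mono by blast
  have hw5: "ang_close w x (5*d)" using m[OF hw] d0 by simp
  from h3 show ?thesis
  proof
    assume hz: "ang_close z (2*A - w) d"
    have zA: "ang_close z (2*A - x) (d+d)" using ac_trans[OF hz ac_neg[OF hw]] .
    from h1 show ?thesis
    proof
      assume hy: "ang_close y (2*A - x) d"
      show ?thesis using hw5 m[OF hy] m[OF zA] d0 by simp
    next
      assume hy: "ang_close y x d"
      from h2 show ?thesis
      proof
        assume hzy: "ang_close z y d"
        show ?thesis using hw5 m[OF hy] m[OF ac_trans[OF hzy hy]] d0 by simp
      next
        assume hzy: "ang_close z (2*B - y) d"
        have zB: "ang_close z (2*B - x) (d+d)" using ac_trans[OF hzy ac_neg[OF hy]] .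
        have "ang_close (2*A - x) (2*B - x) (4*d)"
          by (rule ac_mono[OF ac_trans[OF ac_sym[OF zA] zB]]) simp
        then have "ang_close (2*A) (2*B) (4*d)" by (rule ac_diffI) simp
        then show ?thesis using s2 by blast
      qed
    qed
  next
    assume hz: "ang_close z w d"
    have zx: "ang_close z x (d+d)" using ac_trans[OF hz hw] .
    from h1 show ?thesis
    proof
      assume hy: "ang_close y x d"
      show ?thesis using hw5 m[OF hy] m[OF zx] d0 by simp
    next
      assume hy: "ang_close y (2*A - x) d"
      from h2 show ?thesis
      proof
        assume hzy: "ang_close z y d"
        show ?thesis using hw5 m[OF ac_trans[OF ac_sym[OF hzy] zx]] m[OF zx] d0 by simp
      next
        assume hzy: "ang_close z (2*B - y) d"
        have zB: "ang_close z (2*B - (2*A - x)) (d+d)" using ac_trans[OF hzy ac_neg[OF hy]] .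
        have "ang_close x (2*B - (2*A - x)) (4*d)"
          by (rule ac_mono[OF ac_trans[OF ac_sym[OF zx] zB]]) simp
        then have "ang_close (2*A) (2*B) (4*d)" by (rule ac_diffI) simp
        then show ?thesis using s2 by blast
      qed
    qed
  qed
qed

lemma corner:
  assumes h1: "ang_close y x d \<or> ang_close y (2*A - x) d"
    and h2: "ang_close z y d \<or> ang_close z (2*B - y) d"
    and h3: "ang_close z w d \<or> ang_close z (2*A - w) d"
    and h4: "ang_close w x d \<or> ang_close w (2*B - x) d"
    and s2: "\<not> ang_close (2*A) (2*B) (4*d)"
    and s2b: "\<not> ang_close (2*B) (2*A) (4*d)"
    and s4: "\<not> ang_close (4*A) (4*B) (4*d)"
    and d0: "0 \<le> d"
  shows "(ang_close y x (5*d) \<and> ang_close z x (5*d) \<and> ang_close w x (5*d)) \<or>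
         (ang_close w x (5*d) \<and> ang_close y (2*A - x) (5*d) \<and> ang_close z (2*A - x) (5*d)) \<or>
         (ang_close y x (5*d) \<and> ang_close w (2*B - x) (5*d) \<and> ang_close z (2*B - x) (5*d))"
proof -
  have m: "ang_close u v e \<Longrightarrow> e \<le> 5*d \<Longrightarrow> ang_close u v (5*d)" for u v e using ac_mono by blast
  from h4 show ?thesis
  proof
    assume hw: "ang_close w x d"
    show ?thesis using half[OF h1 h2 h3 hw s2 d0] by blast
  next
    assume hw: "ang_close w (2*B - x) d"
    from h1 show ?thesis
    proof
      assume hy: "ang_close y x d"
      show ?thesis using half[OF h4 h3 h2 hy s2b d0] by blast
    next
      assume hy: "ang_close y (2*A - x) d"
      from h2 show ?thesis
      proof
        assume hzy: "ang_close z y d"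
        from h3 show ?thesis
        proof
          assume hzw: "ang_close z w d"
          have "ang_close (2*A - x) (2*B - x) (4*d)"
            by (rule ac_mono[OF ac_trans[OF ac_trans[OF ac_trans[OF ac_sym[OF hy] ac_sym[OF hzy]] hzw] hw]]) simp
          then have "ang_close (2*A) (2*B) (4*d)" by (rule ac_diffI) simp
          then show ?thesis using s2 by blast
        next
          assume hzw: "ang_close z (2*A - w) d"
          have zA: "ang_close z (2*A - x) (d+d)" using ac_trans[OF hzy hy] .
          have zw: "ang_close z (2*A - (2*B - x)) (d+d)" using ac_trans[OF hzw ac_neg[OF hw]] .
          have "ang_close (2*A - (2*B - x)) (2*A - x) (4*d)"
            by (rule ac_mono[OF ac_trans[OF ac_sym[OF zw] zA]]) simp
          then have c: "ang_close x (2*B - x) (4*d)" by (rule ac_diffI) simp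
          have "ang_close w x (d + 4*d)" using ac_trans[OF hw ac_sym[OF c]] .
          then show ?thesis using m[OF hy] m[OF zA] m[of w x "d+4*d"] d0 by simp
        qed
      next
        assume hzy: "ang_close z (2*B - y) d"
        from h3 show ?thesis
        proof
          assume hzw: "ang_close z w d"
          have zB: "ang_close z (2*B - (2*A - x)) (d+d)" using ac_trans[OF hzy ac_neg[OF hy]] .
          have zw: "ang_close z (2*B - x) (d+d)" using ac_trans[OF hzw hw] .
          have "ang_close (2*B - (2*A - x)) (2*B - x) (4*d)"
            by (rule ac_mono[OF ac_trans[OF ac_sym[OF zB] zw]]) simp
          then have c: "ang_close x (2*A - x) (4*d)" by (rule ac_diffI) simp
          have "ang_close y x (d + 4*d)" using ac_trans[OF hy ac_sym[OF c]] .
          then show ?thesis using m[OF hw] m[OF zw] m[of y x "d+4*d"] d0 by simp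
        next
          assume hzw: "ang_close z (2*A - w) d"
          have zB: "ang_close z (2*B - (2*A - x)) (d+d)" using ac_trans[OF hzy ac_neg[OF hy]] .
          have zA: "ang_close z (2*A - (2*B - x)) (d+d)" using ac_trans[OF hzw ac_neg[OF hw]] .
          have "ang_close (2*B - (2*A - x)) (2*A - (2*B - x)) (4*d)"
            by (rule ac_mono[OF ac_trans[OF ac_sym[OF zB] zA]]) simp
          then have "ang_close (4*B) (4*A) (4*d)" by (rule ac_diffI) simp
          then show ?thesis using s4 ac_sym by blast
        qed
      qed
    qed
  qed
qed


lemma sdot_ssub: "sdot (ssub p q) e = sdot p e - sdot q e"
  by (cases p; cases q; cases e) (simp add: sdot_def ssub_def algebra_simps)

lemma sdot_sadd: "sdot (sadd p q) e = sdot p e + sdot q e"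
  by (cases p; cases q; cases e) (simp add: sdot_def sadd_def algebra_simps)

lemma sdot_edir: "a \<in> {1,2,3} \<Longrightarrow> b \<in> {1,2,3} \<Longrightarrow> sdot (edir a) (edir b) = (if a = b then 1 else 0)"
  by (auto simp: edir_def sdot_def)

lemma sadd_swap: "sadd (sadd p u) v = sadd (sadd p v) u"
  by (cases p; cases u; cases v) (simp add: sadd_def algebra_simps)

lemma site_concl:
  assumes P: "plaq r0 a b = {r, ry, rw, rz}"
    and da: "sdot (ssub rw r) (edir a) = 0" "sdot (ssub ry r) (edir a) \<noteq> 0" "sdot (ssub rz r) (edir a) \<noteq> 0"
    and db: "sdot (ssub ry r) (edir b) = 0" "sdot (ssub rw r) (edir b) \<noteq> 0" "sdot (ssub rz r) (edir b) \<noteq> 0"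
    and D0: "0 \<le> d" "5*d \<le> D"
    and C: "(ang_close (\<theta> ry) (\<theta> r) (5*d) \<and> ang_close (\<theta> rz) (\<theta> r) (5*d) \<and> ang_close (\<theta> rw) (\<theta> r) (5*d)) \<or>
         (ang_close (\<theta> rw) (\<theta> r) (5*d) \<and> ang_close (\<theta> ry) (2*phi a - \<theta> r) (5*d) \<and> ang_close (\<theta> rz) (2*phi a - \<theta> r) (5*d)) \<or>
         (ang_close (\<theta> ry) (\<theta> r) (5*d) \<and> ang_close (\<theta> rw) (2*phi b - \<theta> r) (5*d) \<and> ang_close (\<theta> rz) (2*phi b - \<theta> r) (5*d))"
  shows "(\<forall>r'\<in>plaq r0 a b. ang_close (\<theta> r') (\<theta> r) D)
           \<or> (\<exists>\<alpha>\<in>{a,b}. \<forall>r'\<in>plaq r0 a b. r' \<noteq> r \<longrightarrow>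
                (sdot (ssub r' r) (edir \<alpha>) = 0 \<longrightarrow>
                   ang_close (\<theta> r') (\<theta> r) D) \<and>
                (sdot (ssub r' r) (edir \<alpha>) \<noteq> 0 \<longrightarrow>
                   ang_close (\<theta> r') (2 * phi \<alpha> - \<theta> r) D))"
proof -
  have m: "ang_close u v (5*d) \<Longrightarrow> ang_close u v D" for u v using ac_mono D0 by blast
  have rr: "ang_close (\<theta> r) (\<theta> r) D" using ac_refl D0 by simp
  from C show ?thesis
  proof (elim disjE conjE)
    assume "ang_close (\<theta> ry) (\<theta> r) (5*d)" "ang_close (\<theta> rz) (\<theta> r) (5*d)" "ang_close (\<theta> rw) (\<theta> r) (5*d)"
    then show ?thesis unfolding P using m rr by blast
  next
    assume "ang_close (\<theta> rw) (\<theta> r) (5*d)" "ang_close (\<theta> ry) (2*phi a - \<theta> r) (5*d)" "ang_close (\<theta> rz) (2*phi a - \<theta> r) (5*d)"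
    then have "\<forall>r'\<in>plaq r0 a b. r' \<noteq> r \<longrightarrow>
                (sdot (ssub r' r) (edir a) = 0 \<longrightarrow> ang_close (\<theta> r') (\<theta> r) D) \<and>
                (sdot (ssub r' r) (edir a) \<noteq> 0 \<longrightarrow> ang_close (\<theta> r') (2 * phi a - \<theta> r) D)"
      unfolding P using m da by auto
    then show ?thesis by blast
  next
    assume "ang_close (\<theta> ry) (\<theta> r) (5*d)" "ang_close (\<theta> rw) (2*phi b - \<theta> r) (5*d)" "ang_close (\<theta> rz) (2*phi b - \<theta> r) (5*d)"
    then have "\<forall>r'\<in>plaq r0 a b. r' \<noteq> r \<longrightarrow>
                (sdot (ssub r' r) (edir b) = 0 \<longrightarrow> ang_close (\<theta> r') (\<theta> r) D) \<and>
                (sdot (ssub r' r) (edir b) \<noteq> 0 \<longrightarrow> ang_close (\<theta> r') (2 * phi b - \<theta> r) D)"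
      unfolding P using m db by auto
    then show ?thesis by blast
  qed
qed

lemma Rsym: "ang_close v u d \<or> ang_close v (2*p - u) d \<Longrightarrow> ang_close u v d \<or> ang_close u (2*p - v) d"
proof (elim disjE)
  assume "ang_close v u d" then show ?thesis using ac_sym by blast
next
  assume "ang_close v (2*p - u) d"
  then have "ang_close u (2*p - v) d" by (rule ac_diffI) simp
  then show ?thesis by blast
qed


lemma main_lemma:
  fixes \<Gamma> :: real and r0 r :: site and a b :: nat and \<theta> :: "site \<Rightarrow> real"
  assumes G: "0 < \<Gamma>" "\<Gamma> < 1/50"
    and ab: "a \<in> {1,2,3}" "b \<in> {1,2,3}" "a \<noteq> b"
    and H: "\<forall>r1\<in>plaq r0 a b. \<forall>r2\<in>plaq r0 a b. \<forall>g\<in>{1,2,3}.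
            r2 = sadd r1 (edir g) \<longrightarrow> \<bar>Sg g (\<theta> r1) - Sg g (\<theta> r2)\<bar> < \<Gamma>"
    and r: "r \<in> plaq r0 a b"
  shows "(\<forall>r'\<in>plaq r0 a b. ang_close (\<theta> r') (\<theta> r) (6*pi/sqrt 2 * sqrt \<Gamma>))
           \<or> (\<exists>\<alpha>\<in>{a,b}. \<forall>r'\<in>plaq r0 a b. r' \<noteq> r \<longrightarrow>
                (sdot (ssub r' r) (edir \<alpha>) = 0 \<longrightarrow>
                   ang_close (\<theta> r') (\<theta> r) (6*pi/sqrt 2 * sqrt \<Gamma>)) \<and>
                (sdot (ssub r' r) (edir \<alpha>) \<noteq> 0 \<longrightarrow>
                   ang_close (\<theta> r') (2 * phi \<alpha> - \<theta> r) (6*pi/sqrt 2 * sqrt \<Gamma>)))"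
proof -
  define s where "s = sqrt (\<Gamma>/2)"
  define d where "d = 12/5 * s"
  define D where "D = 6*pi/sqrt 2 * sqrt \<Gamma>"
  define A where "A = phi a"
  define B where "B = phi b"
  have s0: "0 < s" using G by (simp add: s_def)
  have "s < 1/10"
  proof -
    have "sqrt (\<Gamma>/2) < sqrt (1/100)" using G by (simp add: real_sqrt_less_iff)
    moreover have "sqrt (1/100::real) = 1/10" by (simp add: real_sqrt_divide)
    ultimately show ?thesis by (simp add: s_def)
  qed
  have d0: "0 \<le> d" using s0 by (simp add: d_def)
  have "D = 6*pi*s" unfolding D_def s_def by (simp add: real_sqrt_divide)
  then have dD: "5*d \<le> D" using s0 pi_ge_two unfolding d_def by (simp add: mult_right_mono)
  have small: "4*d < 2*pi/3" using \<open>s < 1/10\<close> pi_ge_two unfolding d_def by linarith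
  have s2: "\<not> ang_close (2*A) (2*B) (4*d)" using sep2[OF ab] small unfolding A_def B_def by blast
  have s2b: "\<not> ang_close (2*B) (2*A) (4*d)" using sep2[of b a "4*d"] ab(1,2) ab(3)[symmetric] small unfolding A_def B_def by blast
  have s4: "\<not> ang_close (4*A) (4*B) (4*d)" using sep4[OF ab] small unfolding A_def B_def by blast
  define p0 where "p0 = r0"
  define pa where "pa = sadd r0 (edir a)"
  define pb where "pb = sadd r0 (edir b)"
  define pab where "pab = sadd pa (edir b)"
  have P: "plaq r0 a b = {p0, pa, pb, pab}" unfolding plaq_def p0_def pa_def pb_def pab_def by simp
  have pab': "pab = sadd pb (edir a)" unfolding pab_def pa_def pb_def using sadd_swap by simp
  have K: "ang_close (\<theta> v) (\<theta> u) d \<or> ang_close (\<theta> v) (2 * phi g - \<theta> u) d"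
    if "u \<in> plaq r0 a b" "v \<in> plaq r0 a b" "g \<in> {1,2,3}" "v = sadd u (edir g)" for u v g
    using key[OF _ G] H that unfolding d_def s_def by blast
  have B1: "ang_close (\<theta> pa) (\<theta> p0) d \<or> ang_close (\<theta> pa) (2*A - \<theta> p0) d"
    using K[of p0 pa a] ab unfolding P A_def by (simp add: pa_def p0_def)
  have B2: "ang_close (\<theta> pab) (\<theta> pb) d \<or> ang_close (\<theta> pab) (2*A - \<theta> pb) d"
    using K[of pb pab a] ab pab' unfolding P A_def by simp
  have B3: "ang_close (\<theta> pb) (\<theta> p0) d \<or> ang_close (\<theta> pb) (2*B - \<theta> p0) d"
    using K[of p0 pb b] ab unfolding P B_def by (simp add: pb_def p0_def)
  have B4: "ang_close (\<theta> pab) (\<theta> pa) d \<or> ang_close (\<theta> pab) (2*B - \<theta> pa) d"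
    using K[of pa pab b] ab unfolding P B_def by (simp add: pab_def)
  note B1' = Rsym[OF B1] and B2' = Rsym[OF B2] and B3' = Rsym[OF B3] and B4' = Rsym[OF B4]
  have ed: "sdot (edir g) (edir h) = (if g = h then 1 else 0)" if "g \<in> {a,b}" "h \<in> {a,b}" for g h
    using sdot_edir[of g h] that ab by auto
  note sd = sdot_ssub sdot_sadd ed
  have r4: "r = p0 \<or> r = pa \<or> r = pb \<or> r = pab" using r P by auto
  have "sdot (edir a) (edir b) = 0" "sdot (edir b) (edir a) = 0" "sdot (edir a) (edir a) = 1" "sdot (edir b) (edir b) = 1"
    using ed ab by auto
  note ee = this
  have main: "(\<forall>r'\<in>plaq r0 a b. ang_close (\<theta> r') (\<theta> r) D)
           \<or> (\<exists>\<alpha>\<in>{a,b}. \<forall>r'\<in>plaq r0 a b. r' \<noteq> r \<longrightarrow>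
                (sdot (ssub r' r) (edir \<alpha>) = 0 \<longrightarrow>
                   ang_close (\<theta> r') (\<theta> r) D) \<and>
                (sdot (ssub r' r) (edir \<alpha>) \<noteq> 0 \<longrightarrow>
                   ang_close (\<theta> r') (2 * phi \<alpha> - \<theta> r) D))"
  proof -
    { assume "r = p0"
      have C: ?thesis
        apply (rule site_concl[where ry = pa and rw = pb and rz = pab, OF _ _ _ _ _ _ _ d0 dD])
        using \<open>r = p0\<close> corner[OF B1 B4 B2 B3 s2 s2b s4 d0] P
        by (simp_all add: A_def B_def pa_def pb_def pab_def p0_def sd ee insert_commute)
    } moreover
    { assume "r = pa"
      have C: ?thesis
        apply (rule site_concl[where ry = p0 and rw = pab and rz = pb, OF _ _ _ _ _ _ _ d0 dD])
        using \<open>r = pa\<close> corner[OF B1' B3 B2' B4 s2 s2b s4 d0] P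
        by (simp_all add: A_def B_def pa_def pb_def pab_def p0_def sd ee insert_commute)
    } moreover
    { assume "r = pb"
      have C: ?thesis
        apply (rule site_concl[where ry = pab and rw = p0 and rz = pa, OF _ _ _ _ _ _ _ d0 dD])
        using \<open>r = pb\<close> corner[OF B2 B4' B1 B3' s2 s2b s4 d0] P
        by (simp_all add: A_def B_def pa_def pb_def pab_def p0_def sd ee insert_commute)
    } moreover
    { assume "r = pab"
      have C: ?thesis
        apply (rule site_concl[where ry = pb and rw = pa and rz = p0, OF _ _ _ _ _ _ _ d0 dD])
        using \<open>r = pab\<close> corner[OF B2' B3' B1' B4' s2 s2b s4 d0] P
        by (simp_all add: A_def B_def pa_def pb_def pab_def p0_def sd ee insert_commute)
    }
    ultimately show ?thesis using r4 by blast
  qed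
  then show ?thesis unfolding D_def .
qed

theorem lemma6p7:
  "\<exists>\<Gamma>0>0. \<forall>\<Gamma>. 0 < \<Gamma> \<and> \<Gamma> < \<Gamma>0 \<longrightarrow>
     (\<forall>(r0::site) (a::nat) (b::nat) (\<theta>::site \<Rightarrow> real).
        a \<in> {1,2,3} \<and> b \<in> {1,2,3} \<and> a \<noteq> b \<and>
        (\<forall>r1\<in>plaq r0 a b. \<forall>r2\<in>plaq r0 a b. \<forall>g\<in>{1,2,3}.
            r2 = sadd r1 (edir g) \<longrightarrow> \<bar>Sg g (\<theta> r1) - Sg g (\<theta> r2)\<bar> < \<Gamma>)
        \<longrightarrow>
        (\<forall>r\<in>plaq r0 a b.
           (\<forall>r'\<in>plaq r0 a b. ang_close (\<theta> r') (\<theta> r) (6*pi/sqrt 2 * sqrt \<Gamma>))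
           \<or> (\<exists>\<alpha>\<in>{a,b}. \<forall>r'\<in>plaq r0 a b. r' \<noteq> r \<longrightarrow>
                (sdot (ssub r' r) (edir \<alpha>) = 0 \<longrightarrow>
                   ang_close (\<theta> r') (\<theta> r) (6*pi/sqrt 2 * sqrt \<Gamma>)) \<and>
                (sdot (ssub r' r) (edir \<alpha>) \<noteq> 0 \<longrightarrow>
                   ang_close (\<theta> r') (2 * phi \<alpha> - \<theta> r) (6*pi/sqrt 2 * sqrt \<Gamma>)))))"
  apply (rule exI[of _ "1/50::real"])
  apply (intro conjI allI impI ballI)
   apply simp
  apply (elim conjE)
  apply (rule main_lemma)
        apply assumption+
  done

end
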